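(* Let $(M,g)$ be a semi-Riemannian manifold with Levi-Civita connection $\overset{\circ}{\nabla}$, and let $\nabla$ be an affine connection of the form $\nabla_XY=\overset{\circ}{\nabla}_XY+U(-,X,Y)$, where $U$ is a $(1,2)$-tensor field. Define $S(A,X,Y):=U(A^\flat,X,Y)$ for vector fields $A,X,Y$. Then the following are equivalent: (i) $(U,\nabla)$ is a Schrödinger connection; (ii) for all vector fields $A,X,Y$, $S(A,X,Y)=S(A,Y,X)$ and $S(A,X,Y)+S(Y,A,X)+S(X,Y,A)=0$.
   Context: Musical isomorphisms: $X^\flat=g(X,-)$, $\omega^\sharp=g^{-1}(\omega,-)$. For a $(1,2)$-tensor field $U$, $U(-,X,Y)$ denotes the vector field with $\omega(U(-,X,Y))=U(\omega,X,Y)$. The pair $(U,\nabla)$ with $\nabla_XY=\overset{\circ}{\nabla}_XY+U(-,X,Y)$ is called a Schrödinger connection if for all vector fields $X,Y$ and one-forms $\omega$: (a) $U(\omega,X,Y)=U(\omega,Y,X)$, and (b) $U(\omega,X,Y)+U(\omega,Y,X)+U(X^\flat,\omega^\sharp,Y)+U(X^\flat,Y,\omega^\sharp)+U(Y^\flat,\omega^\sharp,X)+U(Y^\flat,X,\omega^\sharp)=0$. *)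

theory Defs
  imports "HOL-Analysis.Analysis"
begin

text \<open>At a point, the tangent space is a
finite-dimensional real vector space 'v; one-forms are linear functionals
'v \<Rightarrow> real; the metric is a nondegenerate symmetric bilinear form.\<close>

definition semi_riemannian_form :: "('v::euclidean_space \<Rightarrow> 'v \<Rightarrow> real) \<Rightarrow> bool" where
  "semi_riemannian_form g \<longleftrightarrow>
     (\<forall>x. linear (g x)) \<and> (\<forall>x y. g x y = g y x) \<and>
     (\<forall>x. (\<forall>y. g x y = 0) \<longrightarrow> x = 0)"

definition flat :: "('v \<Rightarrow> 'v \<Rightarrow> real) \<Rightarrow> 'v \<Rightarrow> ('v \<Rightarrow> real)" where
  "flat g X = (\<lambda>Z. g X Z)"

definition sharp :: "('v \<Rightarrow> 'v \<Rightarrow> real) \<Rightarrow> ('v \<Rightarrow> real) \<Rightarrow> 'v" where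
  "sharp g \<omega> = (THE v. \<forall>Z. g v Z = \<omega> Z)"

definition tensor12 :: "(('v::euclidean_space \<Rightarrow> real) \<Rightarrow> 'v \<Rightarrow> 'v \<Rightarrow> real) \<Rightarrow> bool" where
  "tensor12 U \<longleftrightarrow>
     (\<forall>\<omega> Y. linear \<omega> \<longrightarrow> linear (\<lambda>X. U \<omega> X Y)) \<and>
     (\<forall>\<omega> X. linear \<omega> \<longrightarrow> linear (\<lambda>Y. U \<omega> X Y)) \<and>
     (\<forall>\<omega>1 \<omega>2 a X Y. linear \<omega>1 \<longrightarrow> linear \<omega>2 \<longrightarrow>
        U (\<lambda>z. a * \<omega>1 z + \<omega>2 z) X Y = a * U \<omega>1 X Y + U \<omega>2 X Y)"

definition schroedinger_pt ::
  "('v::euclidean_space \<Rightarrow> 'v \<Rightarrow> real) \<Rightarrow> (('v \<Rightarrow> real) \<Rightarrow> 'v \<Rightarrow> 'v \<Rightarrow> real) \<Rightarrow> bool" where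
  "schroedinger_pt g U \<longleftrightarrow>
     (\<forall>\<omega> X Y. linear \<omega> \<longrightarrow> U \<omega> X Y = U \<omega> Y X) \<and>
     (\<forall>\<omega> X Y. linear \<omega> \<longrightarrow>
        U \<omega> X Y + U \<omega> Y X + U (flat g X) (sharp g \<omega>) Y + U (flat g X) Y (sharp g \<omega>)
        + U (flat g Y) (sharp g \<omega>) X + U (flat g Y) X (sharp g \<omega>) = 0)"

definition schroedinger_connection ::
  "'m set \<Rightarrow> ('m \<Rightarrow> 'v::euclidean_space \<Rightarrow> 'v \<Rightarrow> real) \<Rightarrow> ('m \<Rightarrow> ('v \<Rightarrow> real) \<Rightarrow> 'v \<Rightarrow> 'v \<Rightarrow> real) \<Rightarrow> bool" where
  "schroedinger_connection M g U \<longleftrightarrow> (\<forall>p\<in>M. schroedinger_pt (g p) (U p))"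

definition S_tensor :: "('v \<Rightarrow> 'v \<Rightarrow> real) \<Rightarrow> (('v \<Rightarrow> real) \<Rightarrow> 'v \<Rightarrow> 'v \<Rightarrow> real) \<Rightarrow> 'v \<Rightarrow> 'v \<Rightarrow> 'v \<Rightarrow> real" where
  "S_tensor g U A X Y = U (flat g A) X Y"

end

theory Submission
  imports Defs
begin

lemma sharp_flat:
  assumes "semi_riemannian_form g"
  shows "sharp g (flat g A) = A"
proof -
  have lin: "\<And>x. linear (g x)" and sym: "\<And>x y. g x y = g y x"
    and nd: "\<And>x. (\<forall>y. g x y = 0) \<Longrightarrow> x = 0"
    using assms unfolding semi_riemannian_form_def by auto
  have "\<And>v. (\<forall>Z. g v Z = g A Z) \<Longrightarrow> v = A"
  proof -
    fix v assume h: "\<forall>Z. g v Z = g A Z"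
    have "\<forall>Z. g (v - A) Z = 0"
    proof
      fix Z
      have "g (v - A) Z = g Z (v - A)" by (rule sym)
      also have "\<dots> = g Z v - g Z A" using linear_diff[OF lin] by simp
      also have "\<dots> = 0" using h sym by simp
      finally show "g (v - A) Z = 0" .
    qed
    then show "v = A" using nd by fastforce
  qed
  then show ?thesis unfolding sharp_def flat_def
    by (intro the_equality) auto
qed

lemma surj_flat:
  fixes g :: "'v::euclidean_space \<Rightarrow> 'v \<Rightarrow> real"
  assumes "semi_riemannian_form g" and lw: "linear \<omega>"
  shows "\<exists>A. flat g A = \<omega>"
proof -
  have lin: "\<And>x. linear (g x)" and sym: "\<And>x y. g x y = g y x"
    and nd: "\<And>x. (\<forall>y. g x y = 0) \<Longrightarrow> x = 0"
    using assms unfolding semi_riemannian_form_def by auto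
  define F where "F v = (\<Sum>i\<in>Basis. g v i *\<^sub>R i)" for v
  have lini: "linear (\<lambda>v. g v i)" for i
  proof -
    have "(\<lambda>v. g v i) = g i" using sym by (intro ext) blast
    then show ?thesis using lin[of i] by simp
  qed
  have linF: "linear F"
  proof -
    have "linear (\<lambda>v. g v i *\<^sub>R i)" for i
      using lini[of i] by (auto simp: linear_iff scaleR_add_left)
    then show ?thesis unfolding F_def F_def[abs_def] by (intro linear_compose_sum) auto
  qed
  have injF: "inj F"
  proof (rule linear_injective_0[THEN iffD2, OF linF], intro allI impI)
    fix v assume "F v = 0"
    then have "\<forall>i\<in>Basis. g v i = 0"
      unfolding F_def by (metis euclidean_eq_iff inner_sum_left_Basis inner_zero_left)
    then have "g v = (\<lambda>_. 0)"
      by (intro linear_eq_stdbasis[OF lin]) (auto simp: linear_zero)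
    then show "v = 0" using nd by simp
  qed
  then have "surj F" using linear_injective_imp_surjective[OF linF] by blast
  then obtain A where A: "F A = (\<Sum>i\<in>Basis. \<omega> i *\<^sub>R i)" by (metis surj_def)
  have "\<forall>i\<in>Basis. g A i = \<omega> i"
    using A unfolding F_def by (metis euclidean_eq_iff inner_sum_left_Basis)
  then have "g A = \<omega>" by (intro linear_eq_stdbasis[OF lin lw]) auto
  then have "flat g A = \<omega>" unfolding flat_def by simp
  then show ?thesis by blast
qed

theorem mainTheorem2:
  fixes M :: "'m set"
    and g :: "'m \<Rightarrow> 'v::euclidean_space \<Rightarrow> 'v \<Rightarrow> real"
    and U :: "'m \<Rightarrow> ('v \<Rightarrow> real) \<Rightarrow> 'v \<Rightarrow> 'v \<Rightarrow> real"
  assumes "\<forall>p\<in>M. semi_riemannian_form (g p)"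
    and "\<forall>p\<in>M. tensor12 (U p)"
  shows "schroedinger_connection M g U \<longleftrightarrow>
    (\<forall>p\<in>M. \<forall>A X Y.
        S_tensor (g p) (U p) A X Y = S_tensor (g p) (U p) A Y X \<and>
        S_tensor (g p) (U p) A X Y + S_tensor (g p) (U p) Y A X + S_tensor (g p) (U p) X Y A = 0)"
  unfolding schroedinger_connection_def
proof (intro ball_cong refl)
  fix p assume "p \<in> M"
  then have sr: "semi_riemannian_form (g p)" using assms(1) by blast
  have linflat: "linear (flat (g p) A)" for A
    using sr unfolding semi_riemannian_form_def flat_def by simp
  let ?S = "S_tensor (g p) (U p)"
  have allw: "(\<forall>\<omega>. linear \<omega> \<longrightarrow> P \<omega>) \<longleftrightarrow> (\<forall>A. P (flat (g p) A))" for P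
    using surj_flat[OF sr] linflat by metis
  have a: "(\<forall>\<omega> X Y. linear \<omega> \<longrightarrow> U p \<omega> X Y = U p \<omega> Y X) \<longleftrightarrow> (\<forall>A X Y. ?S A X Y = ?S A Y X)"
    unfolding S_tensor_def using allw[of "\<lambda>\<omega>. \<forall>X Y. U p \<omega> X Y = U p \<omega> Y X"] by blast
  have b: "(\<forall>\<omega> X Y. linear \<omega> \<longrightarrow>
        U p \<omega> X Y + U p \<omega> Y X + U p (flat (g p) X) (sharp (g p) \<omega>) Y + U p (flat (g p) X) Y (sharp (g p) \<omega>)
        + U p (flat (g p) Y) (sharp (g p) \<omega>) X + U p (flat (g p) Y) X (sharp (g p) \<omega>) = 0) \<longleftrightarrow>
     (\<forall>A X Y. ?S A X Y + ?S A Y X + ?S X A Y + ?S X Y A + ?S Y A X + ?S Y X A = 0)"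
    unfolding S_tensor_def using allw[of "\<lambda>\<omega>. \<forall>X Y. U p \<omega> X Y + U p \<omega> Y X + U p (flat (g p) X) (sharp (g p) \<omega>) Y + U p (flat (g p) X) Y (sharp (g p) \<omega>)
        + U p (flat (g p) Y) (sharp (g p) \<omega>) X + U p (flat (g p) Y) X (sharp (g p) \<omega>) = 0"]
    by (simp add: sharp_flat[OF sr])
  show "schroedinger_pt (g p) (U p) \<longleftrightarrow> (\<forall>A X Y. ?S A X Y = ?S A Y X \<and> ?S A X Y + ?S Y A X + ?S X Y A = 0)"
  proof
    assume h: "schroedinger_pt (g p) (U p)"
    have s: "\<And>A X Y. ?S A X Y = ?S A Y X" using h a unfolding schroedinger_pt_def by blast
    have c: "\<And>A X Y. ?S A X Y + ?S A Y X + ?S X A Y + ?S X Y A + ?S Y A X + ?S Y X A = 0"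
      using h b unfolding schroedinger_pt_def by blast
    show "\<forall>A X Y. ?S A X Y = ?S A Y X \<and> ?S A X Y + ?S Y A X + ?S X Y A = 0"
    proof (intro allI conjI)
      fix A X Y
      show "?S A X Y = ?S A Y X" by (rule s)
      have "?S A X Y + ?S A Y X + ?S X A Y + ?S X Y A + ?S Y A X + ?S Y X A = 0" by (rule c)
      moreover have "?S A Y X = ?S A X Y" "?S X A Y = ?S X Y A" "?S Y X A = ?S Y A X" using s by auto
      ultimately show "?S A X Y + ?S Y A X + ?S X Y A = 0" by linarith
    qed
  next
    assume h: "\<forall>A X Y. ?S A X Y = ?S A Y X \<and> ?S A X Y + ?S Y A X + ?S X Y A = 0"
    have s: "\<And>A X Y. ?S A X Y = ?S A Y X" using h by blast
    have c: "\<And>A X Y. ?S A X Y + ?S A Y X + ?S X A Y + ?S X Y A + ?S Y A X + ?S Y X A = 0"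
    proof -
      fix A X Y
      have "?S A X Y + ?S Y A X + ?S X Y A = 0" using h by blast
      moreover have "?S A Y X = ?S A X Y" "?S X A Y = ?S X Y A" "?S Y X A = ?S Y A X" using s by auto
      ultimately show "?S A X Y + ?S A Y X + ?S X A Y + ?S X Y A + ?S Y A X + ?S Y X A = 0" by linarith
    qed
    show "schroedinger_pt (g p) (U p)" unfolding schroedinger_pt_def
      using a b s c by blast
  qed
qed

end
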